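(* For every election, every candidate that \textsc{PluralityMatching} may return (i.e.\ every candidate $a$ whose integral domination graph $G(a)$ admits a perfect matching) lies in the matching uncovered set. Consequently, the matching uncovered set of every election is non-empty.
   Context: An election: voters $V$ (finite, nonempty), candidates $C$ (finite, nonempty), a profile of linear orders $\sigma_i$ over $C$; $a\succeq_i c$ means $a=c$ or $i$ ranks $a$ above $c$; $\mathrm{top}(i)$ is $i$'s first choice. The integral domination graph $G(a)$ is the bipartite graph with both sides copies of $V$ and edge $(i,j)$ iff $a\succeq_i\mathrm{top}(j)$. The separation graph $G(a,b)$ of candidates $a,b$ is the bipartite graph with both sides copies of $V$ and edge $(i,j)$ iff there exists $c\in C$ with $a\succeq_i c$ and $c\succeq_j b$. The matching uncovered set is the set of candidates $a$ such that for every $b\in C$, $G(a,b)$ admits a perfect matching. \textsc{PluralityMatching} returns an arbitrary candidate $a$ whose $G(a)$ admits a perfect matching. *)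

theory Defs
  imports Main
begin

(* A profile: for each voter i, R i is a linear order on C, where (a,c) \<in> R i
   means  a \<succeq>_i c  (a = c or i ranks a above c). *)
definition election :: "'v set \<Rightarrow> 'c set \<Rightarrow> ('v \<Rightarrow> ('c \<times> 'c) set) \<Rightarrow> bool" where
  "election V C R \<longleftrightarrow> finite V \<and> V \<noteq> {} \<and> finite C \<and> C \<noteq> {} \<and>
     (\<forall>i\<in>V. R i \<subseteq> C \<times> C \<and> linear_order_on C (R i))"

definition top_choice :: "'c set \<Rightarrow> ('v \<Rightarrow> ('c \<times> 'c) set) \<Rightarrow> 'v \<Rightarrow> 'c" where
  "top_choice C R i = (THE c. c \<in> C \<and> (\<forall>d\<in>C. (c, d) \<in> R i))"

(* bipartite graph with both sides copies of V, edges given by E; perfect matching =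
   a bijection f : V \<rightarrow> V with every (i, f i) an edge *)
definition has_perfect_matching :: "'v set \<Rightarrow> ('v \<Rightarrow> 'v \<Rightarrow> bool) \<Rightarrow> bool" where
  "has_perfect_matching V E \<longleftrightarrow> (\<exists>f. bij_betw f V V \<and> (\<forall>i\<in>V. E i (f i)))"

definition dom_graph :: "'c set \<Rightarrow> ('v \<Rightarrow> ('c \<times> 'c) set) \<Rightarrow> 'c \<Rightarrow> 'v \<Rightarrow> 'v \<Rightarrow> bool" where
  "dom_graph C R a i j \<longleftrightarrow> (a, top_choice C R j) \<in> R i"

definition sep_graph :: "'c set \<Rightarrow> ('v \<Rightarrow> ('c \<times> 'c) set) \<Rightarrow> 'c \<Rightarrow> 'c \<Rightarrow> 'v \<Rightarrow> 'v \<Rightarrow> bool" where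
  "sep_graph C R a b i j \<longleftrightarrow> (\<exists>c\<in>C. (a, c) \<in> R i \<and> (c, b) \<in> R j)"

definition matching_uncovered_set :: "'v set \<Rightarrow> 'c set \<Rightarrow> ('v \<Rightarrow> ('c \<times> 'c) set) \<Rightarrow> 'c set" where
  "matching_uncovered_set V C R =
     {a \<in> C. \<forall>b\<in>C. has_perfect_matching V (sep_graph C R a b)}"

end

theory Submission
  imports Defs
begin

lemma lo_refl: "linear_order_on C r \<Longrightarrow> x \<in> C \<Longrightarrow> (x, x) \<in> r"
  unfolding linear_order_on_def partial_order_on_def preorder_on_def refl_on_def by blast

lemma lo_trans: "linear_order_on C r \<Longrightarrow> (x, y) \<in> r \<Longrightarrow> (y, z) \<in> r \<Longrightarrow> (x, z) \<in> r"
  unfolding linear_order_on_def partial_order_on_def preorder_on_def by (meson transD)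

lemma lo_antisym: "linear_order_on C r \<Longrightarrow> (x, y) \<in> r \<Longrightarrow> (y, x) \<in> r \<Longrightarrow> x = y"
  unfolding linear_order_on_def partial_order_on_def by (meson antisymD)

lemma lo_total: "linear_order_on C r \<Longrightarrow> x \<in> C \<Longrightarrow> y \<in> C \<Longrightarrow> x \<noteq> y \<Longrightarrow> (x, y) \<in> r \<or> (y, x) \<in> r"
  unfolding linear_order_on_def total_on_def by blast

lemma ex_max:
  assumes "finite S" "S \<noteq> {}" "S \<subseteq> C" "linear_order_on C r"
  shows "\<exists>c\<in>S. \<forall>x\<in>S. (c, x) \<in> r"
  using assms
proof (induction S rule: finite_ne_induct)
  case (singleton x)
  then show ?case using lo_refl by fastforce
next
  case (insert x F)
  then obtain c where c: "c \<in> F" "\<forall>y\<in>F. (c, y) \<in> r" by auto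
  show ?case
  proof (cases "x = c")
    case True then show ?thesis using c insert lo_refl by fastforce
  next
    case False
    then have "(x, c) \<in> r \<or> (c, x) \<in> r" using lo_total[OF insert(6)] c insert(5) by blast
    then show ?thesis
    proof
      assume "(x, c) \<in> r"
      then show ?thesis using c lo_trans[OF insert(6)] lo_refl[OF insert(6)] insert(5) by blast
    next
      assume "(c, x) \<in> r"
      then show ?thesis using c by blast
    qed
  qed
qed

lemma ex_min:
  assumes "finite S" "S \<noteq> {}" "S \<subseteq> C" "linear_order_on C r"
  shows "\<exists>c\<in>S. \<forall>x\<in>S. (x, c) \<in> r"
  using assms
proof (induction S rule: finite_ne_induct)
  case (singleton x)
  then show ?case using lo_refl by fastforce
next
  case (insert x F)
  then obtain c where c: "c \<in> F" "\<forall>y\<in>F. (y, c) \<in> r" by auto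
  show ?case
  proof (cases "x = c")
    case True then show ?thesis using c insert lo_refl by fastforce
  next
    case False
    then have "(x, c) \<in> r \<or> (c, x) \<in> r" using lo_total[OF insert(6)] c insert(5) by blast
    then show ?thesis
    proof
      assume "(c, x) \<in> r"
      then show ?thesis using c lo_trans[OF insert(6)] lo_refl[OF insert(6)] insert(5) by blast
    next
      assume "(x, c) \<in> r"
      then show ?thesis using c by blast
    qed
  qed
qed

lemma top_choice_prop:
  assumes "election V C R" "i \<in> V"
  shows "top_choice C R i \<in> C \<and> (\<forall>d\<in>C. (top_choice C R i, d) \<in> R i)"
proof -
  have lo: "linear_order_on C (R i)" using assms unfolding election_def by blast
  have fin: "finite C" "C \<noteq> {}" using assms unfolding election_def by auto
  obtain c where c: "c \<in> C" "\<forall>d\<in>C. (c, d) \<in> R i" using ex_max[OF fin order_refl lo] by blast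
  have "\<exists>!c. c \<in> C \<and> (\<forall>d\<in>C. (c, d) \<in> R i)"
    using c lo_antisym[OF lo] by blast
  then show ?thesis unfolding top_choice_def by (rule theI')
qed

lemma pv:
  assumes "finite V" "V \<noteq> {}"
  shows "(\<forall>i\<in>V. linear_order_on C (R i)) \<Longrightarrow> finite W \<Longrightarrow> card W = card V \<Longrightarrow> t ` W \<subseteq> C \<Longrightarrow>
    \<exists>a\<in>t ` W. \<exists>f. bij_betw f V W \<and> (\<forall>i\<in>V. (a, t (f i)) \<in> R i)"
  using assms
proof (induction V arbitrary: W rule: finite_ne_induct)
  case (singleton i)
  have "card W = 1" using singleton.prems(3) by simp
  then obtain w where w: "W = {w}" by (rule card_1_singletonE)
  have "t w \<in> C" using singleton.prems(4) w by simp
  moreover have "linear_order_on C (R i)" using singleton.prems(1) by simp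
  ultimately have "(t w, t w) \<in> R i" by (rule lo_refl[rotated])
  moreover have "bij_betw (\<lambda>_. w) {i} W" using w by (simp add: bij_betw_def)
  moreover have "t w \<in> t ` W" using w by simp
  ultimately show ?case by (intro bexI[of _ "t w"] exI[of _ "\<lambda>_. w"]) simp_all
next
  case (insert i F)
  have lo: "linear_order_on C (R i)" using insert.prems(1) by blast
  have Wne: "W \<noteq> {}" using insert.prems(2,3) insert.hyps(1,3) by auto
  have fW: "finite (t ` W)" using insert.prems(2) by blast
  obtain c where c: "c \<in> t ` W" "\<forall>x\<in>t ` W. (x, c) \<in> R i"
    using ex_min[OF fW _ insert.prems(4) lo] Wne by blast
  then obtain w where w: "w \<in> W" "t w = c" by blast
  have cW': "card (W - {w}) = card F" using insert.prems(2,3) insert.hyps(1,3) w by simp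
  have "\<exists>a\<in>t ` (W - {w}). \<exists>f. bij_betw f F (W - {w}) \<and> (\<forall>j\<in>F. (a, t (f j)) \<in> R j)"
  proof (rule insert.IH)
    show "\<forall>i\<in>F. linear_order_on C (R i)" using insert.prems(1) by blast
    show "finite (W - {w})" using insert.prems(2) by blast
    show "card (W - {w}) = card F" by (rule cW')
    show "t ` (W - {w}) \<subseteq> C" using insert.prems(4) by blast
  qed
  then obtain a f where a: "a \<in> t ` (W - {w})" and f: "bij_betw f F (W - {w})" "\<forall>j\<in>F. (a, t (f j)) \<in> R j"
    by blast
  define g where "g = f(i := w)"
  have "bij_betw g F (W - {w}) = bij_betw f F (W - {w})"
    by (rule bij_betw_cong) (use insert.hyps(3) in \<open>auto simp: g_def\<close>)
  then have "bij_betw g F (W - {w})" using f(1) by simp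
  moreover have "bij_betw g {i} {w}" unfolding g_def by (simp add: bij_betw_def)
  ultimately have "bij_betw g (F \<union> {i}) ((W - {w}) \<union> {w})" by (rule bij_betw_combine) blast
  moreover have "F \<union> {i} = insert i F" "(W - {w}) \<union> {w} = W" using w by auto
  ultimately have bg: "bij_betw g (insert i F) W" by simp
  have "a \<in> t ` W" using a by blast
  then have "(a, c) \<in> R i" using c(2) by blast
  then have "(a, t (g i)) \<in> R i" using w by (simp add: g_def)
  moreover have "\<forall>j\<in>F. (a, t (g j)) \<in> R j" using f(2) insert.hyps(3) unfolding g_def by auto
  ultimately show ?case using bg \<open>a \<in> t ` W\<close> by (intro bexI[of _ a] exI[of _ g]) auto
qed

theorem proposition1:
  fixes V :: "'v set" and C :: "'c set" and R :: "'v \<Rightarrow> ('c \<times> 'c) set"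
  assumes "election V C R"
  shows "(\<forall>a\<in>C. has_perfect_matching V (dom_graph C R a)
            \<longrightarrow> a \<in> matching_uncovered_set V C R)
         \<and> matching_uncovered_set V C R \<noteq> {}"
proof -
  have part1: "a \<in> matching_uncovered_set V C R"
    if aC: "a \<in> C" and hm: "has_perfect_matching V (dom_graph C R a)" for a
  proof -
    obtain f where f: "bij_betw f V V" "\<forall>i\<in>V. dom_graph C R a i (f i)"
      using hm unfolding has_perfect_matching_def by blast
    have "has_perfect_matching V (sep_graph C R a b)" if "b \<in> C" for b
      unfolding has_perfect_matching_def
    proof (intro exI[of _ f] conjI ballI)
      fix i assume i: "i \<in> V"
      have fi: "f i \<in> V" using f(1) i bij_betwE by blast
      show "sep_graph C R a b i (f i)"
        unfolding sep_graph_def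
        using top_choice_prop[OF assms fi] f(2) i that unfolding dom_graph_def by blast
    qed (use f in auto)
    then show ?thesis using aC unfolding matching_uncovered_set_def by blast
  qed
  have lo: "\<forall>i\<in>V. linear_order_on C (R i)" and fin: "finite V" "V \<noteq> {}"
    using assms unfolding election_def by auto
  have sub: "top_choice C R ` V \<subseteq> C" using top_choice_prop[OF assms] by blast
  obtain a f where a: "a \<in> top_choice C R ` V" and f: "bij_betw f V V"
    "\<forall>i\<in>V. (a, top_choice C R (f i)) \<in> R i"
    using pv[OF fin lo fin(1) refl sub] by blast
  have "a \<in> C" using a sub by blast
  moreover have "has_perfect_matching V (dom_graph C R a)"
    unfolding has_perfect_matching_def dom_graph_def using f by blast
  ultimately show ?thesis using part1 by blast
qed

end
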